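(* Let $\{p_n\}_{n\geq 1}$ be the sequence of ordinary prime numbers and let $N\geq 1$ be an integer. Then for (Lebesgue-)almost every choice $(q_1,\dots,q_N)\in(1,\infty)^N$, the set $q=\{p_n\}_{n\geq1}\cup\{q_j\}_{j=1}^N$ is a system of Beurling primes and the Beurling integers $\{\nu_n\}_{n\geq1}$ generated by $q$ satisfy Bohr's condition: there exist $c_1,c_2>0$ such that $$\nu_{n+1}-\nu_n\geq c_1\,\nu_{n+1}^{-c_2},\qquad n\in\mathbb{N}.$$
   Context: A system of Beurling primes is an increasing sequence (finite or infinite) $q=\{q_n\}$ of real numbers with $q_n>1$ (and $q_n\to\infty$ if infinite) such that $\{\log q_n\}$ is linearly independent over $\mathbb{Q}$. The Beurling integers $\mathbb{N}_q=\{\nu_n\}_{n\geq1}$ are all numbers that can be written as finite products of elements of $q$ (including the empty product $\nu_1=1$), listed in increasing order; by linear independence each has a unique such representation. *)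

theory Defs
  imports "HOL-Analysis.Analysis" "HOL-Computational_Algebra.Primes"
begin

text \<open>A system of Beurling primes, given as a family g indexed by a set I
 (the increasing sequence q_n is the family listed in increasing order):
 every g i > 1, the family tends to infinity (only finitely many members below
 any bound), and the logarithms ln (g i) are linearly independent over Q.\<close>
definition beurling_prime_system :: "'i set \<Rightarrow> ('i \<Rightarrow> real) \<Rightarrow> bool" where
  "beurling_prime_system I g \<longleftrightarrow>
     (\<forall>i\<in>I. g i > 1) \<and>
     (\<forall>T. finite {i\<in>I. g i \<le> T}) \<and>
     (\<forall>F c. finite F \<longrightarrow> F \<subseteq> I \<longrightarrow>
        (\<Sum>i\<in>F. of_rat (c i) * ln (g i)) = 0 \<longrightarrow> (\<forall>i\<in>F. c i = (0::rat)))"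

definition beurling_integers :: "'i set \<Rightarrow> ('i \<Rightarrow> real) \<Rightarrow> real set" where
  "beurling_integers I g =
     {\<Prod>i\<in>F. g i ^ k i | F k. finite F \<and> F \<subseteq> I}"

text \<open>The n-th Beurling integer (n \<ge> 1), listing the Beurling integers in
 increasing order: the unique one having exactly n - 1 Beurling integers below it.\<close>
definition beurling_nu :: "'i set \<Rightarrow> ('i \<Rightarrow> real) \<Rightarrow> nat \<Rightarrow> real" where
  "beurling_nu I g n =
     (THE b. b \<in> beurling_integers I g \<and>
             card {a \<in> beurling_integers I g. a < b} = n - 1)"

definition bohr_condition :: "'i set \<Rightarrow> ('i \<Rightarrow> real) \<Rightarrow> bool" where
  "bohr_condition I g \<longleftrightarrow>
     (\<exists>c1 c2. c1 > 0 \<and> c2 > 0 \<and>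
        (\<forall>n\<ge>1. beurling_nu I g (Suc n) - beurling_nu I g n
                 \<ge> c1 * beurling_nu I g (Suc n) powr (- c2)))"

definition primes_plus_index :: "(nat + 'n) set" where
  "primes_plus_index = Inl ` {p. prime p} \<union> Inr ` UNIV"

definition primes_plus :: "real ^ 'n \<Rightarrow> nat + 'n \<Rightarrow> real" where
  "primes_plus x j = (case j of Inl p \<Rightarrow> real p | Inr i \<Rightarrow> x $ i)"

end

theory Submission
  imports Defs
begin


lemma pow_diff_ge:
  fixes s t :: real
  assumes "1 \<le> s" "s \<le> t" "n \<ge> 1"
  shows "t ^ n - s ^ n \<ge> t - s"
  using assms(3)
proof (induction n rule: dec_induct)
  case base then show ?case by simp
next
  case (step n)
  have "t^n \<ge> 1" using assms by (simp add: one_le_power)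
  have "s^n \<ge> 1" using assms by (simp add: one_le_power)
  have "s^n \<le> t^n" using assms by (simp add: power_mono)
  have "t ^ Suc n - s ^ Suc n = t * (t^n - s^n) + s^n * (t - s)" by (simp add: algebra_simps)
  also have "\<dots> \<ge> (t^n - s^n) + (t - s)"
  proof -
    have "t * (t^n - s^n) \<ge> 1 * (t^n - s^n)" using assms \<open>s^n \<le> t^n\<close>
      by (intro mult_right_mono) auto
    moreover have "s^n * (t - s) \<ge> 1 * (t - s)" using assms \<open>s^n \<ge> 1\<close>
      by (intro mult_right_mono) auto
    ultimately show ?thesis by simp
  qed
  finally show ?case using \<open>s^n \<le> t^n\<close> by linarith
qed

lemma slice_subset:
  fixes c C e :: real
  assumes "c \<ge> 1" "n \<ge> 1"
  shows "\<exists>s0. {y. 1 \<le> y \<and> \<bar>c * y ^ n - C\<bar> < e} \<subseteq> {s0 - 2*e .. s0 + 2*e}"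
proof (cases "{y. 1 \<le> y \<and> \<bar>c * y ^ n - C\<bar> < e} = {}")
  case True then show ?thesis by auto
next
  case False
  then obtain s0 where s0: "1 \<le> s0" "\<bar>c * s0 ^ n - C\<bar> < e" by auto
  have "y \<in> {s0 - 2*e .. s0 + 2*e}" if y: "1 \<le> y" "\<bar>c * y ^ n - C\<bar> < e" for y
  proof -
    have key: "\<bar>t - s\<bar> \<le> \<bar>c * t ^ n - c * s ^ n\<bar>" if "1 \<le> s" "1 \<le> t" for s t :: real
    proof (cases "s \<le> t")
      case True
      have "t - s \<le> t^n - s^n" using pow_diff_ge[OF that(1) True assms(2)] .
      also have "\<dots> \<le> c * (t^n - s^n)"
      proof -
        have "t^n - s^n \<ge> 0" using power_mono[of s t n] True that by simp
        then show ?thesis using assms mult_right_mono[of 1 c "t^n - s^n"] by simp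
      qed
      finally show ?thesis using True by (simp add: algebra_simps)
    next
      case False
      have "s - t \<le> s^n - t^n" using pow_diff_ge[OF that(2) _ assms(2)] False by simp
      also have "\<dots> \<le> c * (s^n - t^n)"
      proof -
        have "s^n - t^n \<ge> 0" using power_mono[of t s n] False that by simp
        then show ?thesis using assms mult_right_mono[of 1 c "s^n - t^n"] by simp
      qed
      finally show ?thesis using False by (simp add: algebra_simps)
    qed
    have "\<bar>y - s0\<bar> \<le> \<bar>c * y ^ n - c * s0 ^ n\<bar>" using key[OF s0(1) y(1)] .
    also have "\<dots> < 2*e" using s0(2) y(2) by linarith
    finally show ?thesis by auto
  qed
  then show ?thesis by blast
qed

lemma slice_measure:
  fixes c C e :: real
  assumes "c \<ge> 1" "n \<ge> 1" "e > 0"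
  shows "emeasure lborel {y. 1 \<le> y \<and> \<bar>c * y ^ n - C\<bar> < e} \<le> ennreal (4*e)"
proof -
  obtain s0 where s0: "{y. 1 \<le> y \<and> \<bar>c * y ^ n - C\<bar> < e} \<subseteq> {s0 - 2*e .. s0 + 2*e}"
    using slice_subset[OF assms(1,2)] by blast
  have "emeasure lborel {y. 1 \<le> y \<and> \<bar>c * y ^ n - C\<bar> < e} \<le> emeasure lborel {s0 - 2*e .. s0 + 2*e}"
    by (rule emeasure_mono[OF s0]) auto
  also have "\<dots> = ennreal (4*e)" using assms by simp
  finally show ?thesis .
qed



lemma g_upd:
  fixes f :: "'a::euclidean_space \<Rightarrow> real"
  assumes i: "i \<in> Basis"
  shows "(\<Sum>b\<in>Basis. (f(i:=y)) b *\<^sub>R b) = (\<Sum>b\<in>Basis-{i}. f b *\<^sub>R b) + y *\<^sub>R i"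
proof -
  have "(\<Sum>b\<in>Basis. (f(i:=y)) b *\<^sub>R b) = (f(i:=y)) i *\<^sub>R i + (\<Sum>b\<in>Basis-{i}. (f(i:=y)) b *\<^sub>R b)"
    using i by (simp add: sum.remove)
  also have "(\<Sum>b\<in>Basis-{i}. (f(i:=y)) b *\<^sub>R b) = (\<Sum>b\<in>Basis-{i}. f b *\<^sub>R b)"
    by (rule sum.cong) auto
  finally show ?thesis by simp
qed

lemma g_inner:
  fixes f :: "'a::euclidean_space \<Rightarrow> real"
  assumes b: "b \<in> Basis"
  shows "(\<Sum>b'\<in>Basis. f b' *\<^sub>R b') \<bullet> b = f b"
  using b by (simp add: inner_sum_left inner_Basis if_distrib cong: if_cong)

lemma slice_bound:
  fixes E :: "'a::euclidean_space set" and c R :: real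
  assumes E[measurable]: "E \<in> sets borel" and i: "i \<in> Basis" and R: "R \<ge> 0"
    and box: "\<And>x b. x \<in> E \<Longrightarrow> b \<in> Basis \<Longrightarrow> b \<noteq> i \<Longrightarrow> 0 \<le> x \<bullet> b \<and> x \<bullet> b \<le> R"
    and sl: "\<And>x. emeasure lborel {y. x + y *\<^sub>R i \<in> E} \<le> ennreal c"
    and c: "c \<ge> 0"
  shows "emeasure lborel E \<le> ennreal (c * R ^ (DIM('a) - 1))"
proof -
  interpret product_sigma_finite "\<lambda>_. lborel :: real measure" by standard
  define P where "P = (Pi\<^sub>M (Basis::'a set) (\<lambda>_. lborel :: real measure))"
  define g where "g = (\<lambda>f. \<Sum>b\<in>Basis. f b *\<^sub>R b :: 'a)"
  define S where "S = g -` E \<inter> space P"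
  have gm[measurable]: "g \<in> borel_measurable P" unfolding g_def P_def by measurable
  have Sm: "S \<in> sets P" unfolding S_def by measurable
  have "emeasure lborel E = emeasure (distr P borel g) E"
    unfolding P_def g_def by (simp add: lborel_eq[symmetric])
  also have "\<dots> = emeasure P S"
    unfolding S_def by (subst emeasure_distr) auto
  also have "\<dots> = (\<integral>\<^sup>+f. indicator S f \<partial>P)"
    using Sm by simp
  also have "\<dots> = (\<integral>\<^sup>+f. (\<integral>\<^sup>+y. indicator S (f(i:=y)) \<partial>lborel) \<partial>(Pi\<^sub>M (Basis-{i}) (\<lambda>_. lborel)))"
  proof -
    have "integral\<^sup>N (Pi\<^sub>M (insert i (Basis-{i})) (\<lambda>_. lborel)) (indicator S)
        = (\<integral>\<^sup>+f. (\<integral>\<^sup>+y. indicator S (f(i:=y)) \<partial>lborel) \<partial>(Pi\<^sub>M (Basis-{i}) (\<lambda>_. lborel)))"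
      by (rule product_nn_integral_insert) (use Sm i in \<open>auto simp: P_def insert_absorb\<close>)
    then show ?thesis using i by (simp add: P_def insert_absorb)
  qed
  also have "\<dots> \<le> (\<integral>\<^sup>+f. ennreal c * indicator (Pi\<^sub>E (Basis-{i}) (\<lambda>_. {0..R})) f \<partial>(Pi\<^sub>M (Basis-{i}) (\<lambda>_. lborel)))"
  proof (rule nn_integral_mono)
    fix f assume f: "f \<in> space (Pi\<^sub>M (Basis-{i}) (\<lambda>_. lborel :: real measure))"
    define x0 where "x0 = (\<Sum>b\<in>Basis-{i}. f b *\<^sub>R b :: 'a)"
    have fy: "f(i:=y) \<in> space P" for y
      using f i unfolding P_def by (auto simp: space_PiM PiE_def extensional_def)
    have gy: "g (f(i:=y)) = x0 + y *\<^sub>R i" for y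
      unfolding g_def x0_def using g_upd[OF i] .
    have ind: "indicator S (f(i:=y)) = (indicator {y. x0 + y *\<^sub>R i \<in> E} y :: ennreal)" for y
      using fy[of y] gy[of y] by (auto simp: S_def indicator_def)
    show "(\<integral>\<^sup>+y. indicator S (f(i:=y)) \<partial>lborel) \<le> ennreal c * indicator (Pi\<^sub>E (Basis-{i}) (\<lambda>_. {0..R})) f"
    proof (cases "f \<in> Pi\<^sub>E (Basis-{i}) (\<lambda>_. {0..R})")
      case True
      have meas: "{y. x0 + y *\<^sub>R i \<in> E} \<in> sets lborel" by measurable
      have "(\<integral>\<^sup>+y. indicator S (f(i:=y)) \<partial>lborel) = emeasure lborel {y. x0 + y *\<^sub>R i \<in> E}"
        using meas by (simp add: ind)
      also have "\<dots> \<le> ennreal c" by (rule sl)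
      finally show ?thesis using True by simp
    next
      case False
      have "indicator S (f(i:=y)) = (0::ennreal)" for y
      proof -
        have "f \<notin> Pi (Basis-{i}) (\<lambda>_. {0..R})" using False f by (auto simp: space_PiM PiE_def)
        then obtain b where b: "b \<in> Basis - {i}" "f b \<notin> {0..R}"
          unfolding Pi_def by blast
        have "g (f(i:=y)) \<notin> E"
        proof
          assume "g (f(i:=y)) \<in> E"
          from box[OF this, of b] b have "0 \<le> g (f(i:=y)) \<bullet> b \<and> g (f(i:=y)) \<bullet> b \<le> R" by auto
          moreover have "g (f(i:=y)) \<bullet> b = f b" unfolding g_def using g_inner[of b "f(i:=y)"] b by auto
          ultimately show False using b by auto
        qed
        then show ?thesis by (simp add: S_def indicator_def)
      qed
      then show ?thesis by simp
    qed
  qed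
  also have "\<dots> = ennreal c * emeasure (Pi\<^sub>M (Basis-{i}) (\<lambda>_. lborel)) (Pi\<^sub>E (Basis-{i}) (\<lambda>_. {0..R}))"
    by (rule nn_integral_cmult_indicator) (auto intro!: sets_PiM_I_finite)
  also have "\<dots> = ennreal c * (\<Prod>b\<in>Basis-{i}. emeasure lborel {0..R})"
    by (subst emeasure_PiM) auto
  also have "\<dots> = ennreal (c * R ^ (DIM('a) - 1))"
    using R c i by (simp add: prod_ennreal ennreal_mult ennreal_power card_Diff_singleton)
  finally show ?thesis .
qed



definition xpow :: "real^'n \<Rightarrow> ('n \<Rightarrow> nat) \<Rightarrow> real" where
  "xpow x a = (\<Prod>i\<in>UNIV. (x$i)^(a i))"

definition dT :: "real^'n \<Rightarrow> nat \<times> nat \<times> ('n \<Rightarrow> nat) \<times> ('n \<Rightarrow> nat) \<Rightarrow> real" where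
  "dT x T = (case T of (m, m', a, b) \<Rightarrow> real m * xpow x a - real m' * xpow x b)"

definition goodT :: "nat \<times> nat \<times> ('n \<Rightarrow> nat) \<times> ('n \<Rightarrow> nat) \<Rightarrow> bool" where
  "goodT T = (case T of (m, m', a, b) \<Rightarrow> m \<ge> 1 \<and> (\<exists>j. a j > 0 \<and> b j = 0))"

definition badset :: "real \<Rightarrow> real \<Rightarrow> nat \<times> nat \<times> ('n \<Rightarrow> nat) \<times> ('n \<Rightarrow> nat) \<Rightarrow> (real^'n) set" where
  "badset R e T = {x. (\<forall>i. 1 \<le> x$i \<and> x$i \<le> R) \<and> \<bar>dT x T\<bar> < e}"

lemma badset_sets[measurable]: "badset R e T \<in> sets borel"
  unfolding badset_def dT_def xpow_def by (cases T) (simp, measurable)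

lemma slice_measure2:
  fixes c C e d :: real
  assumes "c \<ge> 1" "n \<ge> 1" "e > 0"
  shows "emeasure lborel {y. 1 \<le> d + y \<and> \<bar>c * (d + y) ^ n - C\<bar> < e} \<le> ennreal (4*e)"
proof -
  obtain s0 where s0: "{y. 1 \<le> y \<and> \<bar>c * y ^ n - C\<bar> < e} \<subseteq> {s0 - 2*e .. s0 + 2*e}"
    using slice_subset[OF assms(1,2)] by blast
  have sub: "{y. 1 \<le> d + y \<and> \<bar>c * (d + y) ^ n - C\<bar> < e} \<subseteq> {s0 - d - 2*e .. s0 - d + 2*e}"
    using s0 by force
  have "emeasure lborel {y. 1 \<le> d + y \<and> \<bar>c * (d + y) ^ n - C\<bar> < e} \<le> emeasure lborel {s0 - d - 2*e .. s0 - d + 2*e}"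
    by (rule emeasure_mono[OF sub]) auto
  also have "\<dots> = ennreal (4*e)" using assms by simp
  finally show ?thesis .
qed

lemma xpow_upd:
  "xpow (x + y *\<^sub>R axis j 1) a = (x$j + y)^(a j) * (\<Prod>k\<in>UNIV-{j}. (x$k)^(a k))"
proof -
  have "xpow (x + y *\<^sub>R axis j 1) a = (\<Prod>k\<in>UNIV. ((x + y *\<^sub>R axis j 1)$k)^(a k))"
    by (simp add: xpow_def)
  also have "\<dots> = ((x + y *\<^sub>R axis j 1)$j)^(a j) * (\<Prod>k\<in>UNIV-{j}. ((x + y *\<^sub>R axis j 1)$k)^(a k))"
    by (subst prod.remove[of UNIV j]) auto
  also have "(\<Prod>k\<in>UNIV-{j}. ((x + y *\<^sub>R axis j 1)$k)^(a k)) = (\<Prod>k\<in>UNIV-{j}. (x$k)^(a k))"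
    by (rule prod.cong) (auto simp: axis_def)
  finally show ?thesis by (simp add: axis_def)
qed

lemma xpow_upd0:
  assumes "b j = 0"
  shows "xpow (x + y *\<^sub>R axis j 1) b = xpow x b"
  unfolding xpow_def using assms by (intro prod.cong) (auto simp: axis_def)

lemma measure_badset:
  fixes T :: "nat \<times> nat \<times> ('n::finite \<Rightarrow> nat) \<times> ('n \<Rightarrow> nat)"
  assumes g: "goodT T" and R: "R \<ge> 1" and e: "e > 0"
  shows "emeasure lborel (badset R e T) \<le> ennreal (4*e * R ^ (CARD('n) - 1))"
proof -
  obtain m m' a b where T: "T = (m, m', a, b)" by (cases T) auto
  from g obtain j where j: "a j > 0" "b j = 0" and m: "m \<ge> 1" by (auto simp: goodT_def T)
  have "emeasure lborel (badset R e T) \<le> ennreal ((4*e) * R ^ (DIM(real^'n) - 1))"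
  proof (rule slice_bound[where i="axis j 1"])
    show "axis j 1 \<in> (Basis :: (real^'n) set)" by (simp add: Basis_vec_def) blast
    show "R \<ge> 0" using R by simp
    show "4*e \<ge> 0" using e by simp
    show "0 \<le> x \<bullet> bb \<and> x \<bullet> bb \<le> R" if "x \<in> badset R e T" "bb \<in> Basis" "bb \<noteq> axis j 1" for x bb
    proof -
      from that(2) obtain k where k: "bb = axis k 1" by (auto simp: Basis_vec_def)
      have "x \<bullet> bb = x$k" by (simp add: k cart_eq_inner_axis)
      then show ?thesis using that(1) by (auto simp: badset_def) (smt (verit))+
    qed
    show "emeasure lborel {y. x + y *\<^sub>R axis j 1 \<in> badset R e T} \<le> ennreal (4*e)" for x
    proof (cases "{y. x + y *\<^sub>R axis j 1 \<in> badset R e T} = {}")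
      case True then show ?thesis by simp
    next
      case False
      then obtain y0 where y0: "x + y0 *\<^sub>R axis j 1 \<in> badset R e T" by auto
      have xk: "x$k \<ge> 1" if "k \<noteq> j" for k
      proof -
        have "1 \<le> x $ k + y0 * (if k = j then 1 else 0)" using y0 by (auto simp: badset_def axis_def)
        then show ?thesis using that by simp
      qed
      define c where "c = real m * (\<Prod>k\<in>UNIV-{j}. (x$k)^(a k))"
      have c: "c \<ge> 1"
      proof -
        have "(\<Prod>k\<in>UNIV-{j}. (x$k)^(a k)) \<ge> 1"
          using xk by (intro prod_ge_1) (auto simp: one_le_power)
        moreover have "real m \<ge> 1" using m by simp
        ultimately have "1 * 1 \<le> real m * (\<Prod>k\<in>UNIV-{j}. (x$k)^(a k))"
          by (intro mult_mono) auto
        then show ?thesis unfolding c_def by simp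
      qed
      have sub: "{y. x + y *\<^sub>R axis j 1 \<in> badset R e T} \<subseteq>
          {y. 1 \<le> x$j + y \<and> \<bar>c * (x$j + y) ^ (a j) - real m' * xpow x b\<bar> < e}"
      proof (intro subsetI CollectI)
        fix y assume "y \<in> {y. x + y *\<^sub>R axis j 1 \<in> badset R e T}"
        then have y: "\<forall>i. 1 \<le> (x + y *\<^sub>R axis j 1)$i \<and> (x + y *\<^sub>R axis j 1)$i \<le> R"
          "\<bar>dT (x + y *\<^sub>R axis j 1) T\<bar> < e" by (auto simp: badset_def)
        have "(x + y *\<^sub>R axis j 1)$j = x$j + y" by (simp add: axis_def)
        then have "1 \<le> x$j + y" using y(1) by metis
        moreover have "dT (x + y *\<^sub>R axis j 1) T = c * (x$j + y) ^ (a j) - real m' * xpow x b"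
          unfolding dT_def T using xpow_upd[of x y j a] xpow_upd0[of b j x y, OF j(2)]
          by (simp add: c_def)
        ultimately show "1 \<le> x$j + y \<and> \<bar>c * (x$j + y) ^ (a j) - real m' * xpow x b\<bar> < e"
          using y(2) by simp
      qed
      have "emeasure lborel {y. x + y *\<^sub>R axis j 1 \<in> badset R e T}
           \<le> emeasure lborel {y. 1 \<le> x$j + y \<and> \<bar>c * (x$j + y) ^ (a j) - real m' * xpow x b\<bar> < e}"
        by (rule emeasure_mono[OF sub]) measurable
      also have "\<dots> \<le> ennreal (4*e)"
        using c j e by (intro slice_measure2) auto
      finally show ?thesis .
    qed
  qed (rule badset_sets)
  then show ?thesis by simp
qed



definition hT :: "nat \<times> nat \<times> ('n::finite \<Rightarrow> nat) \<times> ('n \<Rightarrow> nat) \<Rightarrow> nat" where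
  "hT T = (case T of (m, m', a, b) \<Rightarrow> m + m' + sum a UNIV + sum b UNIV)"

definition wT :: "nat \<times> nat \<times> ('n::finite \<Rightarrow> nat) \<times> ('n \<Rightarrow> nat) \<Rightarrow> real" where
  "wT T = inverse (real (hT T + 1) ^ (2 * CARD('n) + 4))"

lemma pow_aux1: "(q::nat) * (q * (q^N * q^N)) = q ^ (2 * N + 2)"
  by (simp add: mult_2 power_add power2_eq_square)

lemma inv_aux: "(A::real) > 0 \<Longrightarrow> A * inverse (A * B) = inverse B"
  by (simp add: inverse_mult_distrib)

lemma pow_aux2: "(q::real) > 0 \<Longrightarrow> q ^ (2 * N + 2) * inverse (q ^ (2 * N + 4)) = inverse (q ^ 2)"
proof -
  assume q: "q > 0"
  have e: "2 * N + 4 = (2 * N + 2) + 2" by simp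
  have "q ^ (2 * N + 4) = q ^ (2 * N + 2) * q ^ 2" by (simp only: e power_add)
  then show ?thesis using q inv_aux[of "q ^ (2 * N + 2)" "q^2"] by simp
qed

lemma wT_pos: "wT T > 0"
  unfolding wT_def by simp

lemma level_subset:
  "{T :: nat \<times> nat \<times> ('n::finite \<Rightarrow> nat) \<times> ('n \<Rightarrow> nat). hT T = s} \<subseteq>
     {..s} \<times> {..s} \<times> (Pi\<^sub>E UNIV (\<lambda>_. {..s})) \<times> (Pi\<^sub>E UNIV (\<lambda>_. {..s}))"
proof
  fix T :: "nat \<times> nat \<times> ('n::finite \<Rightarrow> nat) \<times> ('n \<Rightarrow> nat)"
  assume "T \<in> {T. hT T = s}"
  then obtain m m' a b where T: "T = (m, m', a, b)" and h: "m + m' + sum a UNIV + sum b UNIV = s"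
    by (cases T) (auto simp: hT_def)
  have "a i \<le> s" for i using member_le_sum[of i UNIV a] h by auto
  moreover have "b i \<le> s" for i using member_le_sum[of i UNIV b] h by auto
  ultimately show "T \<in> {..s} \<times> {..s} \<times> (Pi\<^sub>E UNIV (\<lambda>_. {..s})) \<times> (Pi\<^sub>E UNIV (\<lambda>_. {..s}))"
    using h by (auto simp: T PiE_UNIV_domain)
qed

lemma level_finite: "finite {T :: nat \<times> nat \<times> ('n::finite \<Rightarrow> nat) \<times> ('n \<Rightarrow> nat). hT T = s}"
  by (rule finite_subset[OF level_subset]) (intro finite_cartesian_product finite_PiE; simp)

lemma level_card: "card {T :: nat \<times> nat \<times> ('n::finite \<Rightarrow> nat) \<times> ('n \<Rightarrow> nat). hT T = s}
   \<le> (s+1) ^ (2 * CARD('n) + 2)"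
proof -
  have "card {T :: nat \<times> nat \<times> ('n::finite \<Rightarrow> nat) \<times> ('n \<Rightarrow> nat). hT T = s}
      \<le> card ({..s} \<times> {..s} \<times> (Pi\<^sub>E (UNIV::'n set) (\<lambda>_. {..s})) \<times> (Pi\<^sub>E (UNIV::'n set) (\<lambda>_. {..s})))"
    by (rule card_mono[OF _ level_subset]) (intro finite_cartesian_product finite_PiE; simp)
  also have "\<dots> = (s+1) * ((s+1) * ((s+1)^CARD('n) * (s+1)^CARD('n)))"
    by (simp add: card_cartesian_product card_PiE)
  also have "\<dots> = (s+1) ^ (2 * CARD('n) + 2)"
    by (rule pow_aux1)
  finally show ?thesis .
qed

definition Cw :: real where "Cw = suminf (\<lambda>n::nat. inverse (real n ^ 2))"

lemma sum_wT_bound: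
  fixes F :: "(nat \<times> nat \<times> ('n::finite \<Rightarrow> nat) \<times> ('n \<Rightarrow> nat)) set"
  assumes F: "finite F"
  shows "(\<Sum>T\<in>F. wT T) \<le> Cw"
proof -
  define K where "K = Max (insert 0 (hT ` F))"
  define L where "L = (\<lambda>s. {T :: nat \<times> nat \<times> ('n::finite \<Rightarrow> nat) \<times> ('n \<Rightarrow> nat). hT T = s})"
  have sub: "F \<subseteq> (\<Union>s\<in>{..K}. L s)"
    using F by (auto simp: K_def L_def)
  have "(\<Sum>T\<in>F. wT T) \<le> (\<Sum>T\<in>(\<Union>s\<in>{..K}. L s). wT T)"
    by (rule sum_mono2[OF _ sub]) (auto simp: L_def level_finite less_imp_le[OF wT_pos])
  also have "\<dots> = (\<Sum>s\<in>{..K}. \<Sum>T\<in>L s. wT T)"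
    by (rule sum.UNION_disjoint) (auto simp: L_def level_finite)
  also have "\<dots> \<le> (\<Sum>s\<in>{..K}. inverse (real (s+1) ^ 2))"
  proof (rule sum_mono)
    fix s assume "s \<in> {..K}"
    have "(\<Sum>T\<in>L s. wT T) = real (card (L s)) * inverse (real (s+1) ^ (2 * CARD('n) + 4))"
      by (simp add: L_def wT_def)
    also have "\<dots> \<le> real ((s+1) ^ (2 * CARD('n) + 2)) * inverse (real (s+1) ^ (2 * CARD('n) + 4))"
    proof (intro mult_right_mono)
      show "real (card (L s)) \<le> real ((s+1) ^ (2 * CARD('n) + 2))"
        unfolding L_def of_nat_le_iff by (rule level_card)
    qed simp
    also have "\<dots> = inverse (real (s+1) ^ 2)"
      unfolding of_nat_power by (rule pow_aux2) simp
    finally show "(\<Sum>T\<in>L s. wT T) \<le> inverse (real (s+1) ^ 2)" .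
  qed
  also have "\<dots> = (\<Sum>n\<in>Suc ` {..K}. inverse (real n ^ 2))"
    by (subst sum.reindex) auto
  also have "\<dots> \<le> Cw"
    unfolding Cw_def by (rule sum_le_suminf) (auto intro: inverse_power_summable)
  finally show ?thesis .
qed



lemma measure_le_of_emeasure:
  assumes "emeasure M A \<le> ennreal r" "r \<ge> 0"
  shows "measure M A \<le> r"
  using enn2real_mono[OF assms(1)] assms(2) by (simp add: measure_def)

definition Zset :: "real \<Rightarrow> nat \<times> nat \<times> ('n \<Rightarrow> nat) \<times> ('n \<Rightarrow> nat) \<Rightarrow> (real^'n) set" where
  "Zset R T = {x. (\<forall>i. 1 \<le> x$i \<and> x$i \<le> R) \<and> dT x T = 0}"

lemma Zset_sets[measurable]: "Zset R T \<in> sets borel"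
  unfolding Zset_def dT_def xpow_def by (cases T) (simp, measurable)

lemma Zset_null:
  fixes T :: "nat \<times> nat \<times> ('n::finite \<Rightarrow> nat) \<times> ('n \<Rightarrow> nat)"
  assumes g: "goodT T" and R: "R \<ge> 1"
  shows "Zset R T \<in> null_sets lborel"
proof -
  define C where "C = 4 * R ^ (CARD('n) - 1)"
  have C: "C > 0" using R by (simp add: C_def)
  have le: "emeasure lborel (Zset R T) \<le> 0 + ennreal e" if e: "e > 0" for e
  proof -
    have "Zset R T \<subseteq> badset R (e / C) T" using e C by (auto simp: Zset_def badset_def)
    then have "emeasure lborel (Zset R T) \<le> emeasure lborel (badset R (e / C) T)"
      by (intro emeasure_mono) auto
    also have "\<dots> \<le> ennreal (4 * (e / C) * R ^ (CARD('n) - 1))"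
      using e C by (intro measure_badset[OF g R]) auto
    also have "4 * (e / C) * R ^ (CARD('n) - 1) = e"
    proof -
      have "R ^ (CARD('n) - 1) > 0" using R by simp
      then show ?thesis using R by (simp add: C_def field_simps)
    qed
    finally show ?thesis by simp
  qed
  have "emeasure lborel (Zset R T) \<le> 0" by (rule ennreal_le_epsilon) (rule le)
  then have "emeasure lborel (Zset R T) = 0" by (simp only: le_zero_eq)
  then show ?thesis by (rule null_setsI) simp
qed

lemma AE_finite_bad:
  assumes R: "R \<ge> 1"
  shows "AE x in (lborel :: (real^'n::finite) measure).
     finite {T :: nat \<times> nat \<times> ('n \<Rightarrow> nat) \<times> ('n \<Rightarrow> nat). goodT T \<and> x \<in> badset R (wT T) T}"
proof -
  define enc where "enc = from_nat_into (UNIV :: (nat \<times> nat \<times> ('n \<Rightarrow> nat) \<times> ('n \<Rightarrow> nat)) set)"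
  have inf: "infinite (UNIV :: (nat \<times> nat \<times> ('n \<Rightarrow> nat) \<times> ('n \<Rightarrow> nat)) set)"
    by (rule infinite_super[OF subset_UNIV range_inj_infinite[of "\<lambda>n::nat. (n, 0::nat, (\<lambda>_. 0::nat), (\<lambda>_. 0::nat))"]])
       (auto simp: inj_def)
  have bij: "bij enc" unfolding enc_def
    by (rule bij_betw_from_nat_into[OF _ inf]) simp
  define A where "A = (\<lambda>n. if goodT (enc n) then badset R (wT (enc n)) (enc n) else ({} :: (real^'n) set))"
  define C where "C = 4 * R ^ (CARD('n) - 1)"
  have C: "C > 0" using R by (simp add: C_def)
  have Am[measurable]: "A n \<in> sets lborel" for n by (simp add: A_def)
  have Ab: "emeasure lborel (A n) \<le> ennreal (C * wT (enc n))" for n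
  proof (cases "goodT (enc n)")
    case True
    have eqA: "A n = badset R (wT (enc n)) (enc n)" using True by (simp add: A_def)
    have "emeasure lborel (A n) \<le> ennreal (4 * wT (enc n) * R ^ (CARD('n) - 1))"
      unfolding eqA by (rule measure_badset[OF True R wT_pos])
    moreover have "4 * wT (enc n) * R ^ (CARD('n) - 1) = C * wT (enc n)"
      unfolding C_def by (simp only: mult.commute mult.left_commute mult.assoc)
    ultimately show ?thesis by metis
  next
    case False then show ?thesis by (simp add: A_def)
  qed
  have sw: "summable (\<lambda>n. wT (enc n))"
  proof (rule summableI_nonneg_bounded)
    show "0 \<le> wT (enc n)" for n using wT_pos less_imp_le by blast
    show "(\<Sum>i<n. wT (enc i)) \<le> Cw" for n
    proof -
      have "(\<Sum>i<n. wT (enc i)) = (\<Sum>T\<in>enc ` {..<n}. wT T)"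
        using bij by (subst sum.reindex) (auto simp: bij_betw_def intro: inj_on_subset)
      also have "\<dots> \<le> Cw" by (rule sum_wT_bound) simp
      finally show ?thesis .
    qed
  qed
  have sm: "summable (\<lambda>n. measure lborel (A n))"
  proof (rule summable_comparison_test'[where N=0])
    show "summable (\<lambda>n. C * wT (enc n))" using sw by (rule summable_mult)
    show "norm (measure lborel (A n)) \<le> C * wT (enc n)" for n
      using measure_le_of_emeasure[OF Ab[of n]] C wT_pos[of "enc n"] by simp
  qed
  have fin: "emeasure lborel (A n) < \<infinity>" for n
    by (rule le_less_trans[OF Ab]) simp
  have "AE x in lborel. eventually (\<lambda>n. x \<in> space lborel - A n) sequentially"
    by (rule borel_cantelli_AE1[OF Am fin sm])
  then show ?thesis
  proof (rule AE_mp[OF _ AE_I2], intro impI)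
    fix x assume "eventually (\<lambda>n. x \<in> space lborel - A n) sequentially"
    then obtain N0 where N0: "\<And>n. n \<ge> N0 \<Longrightarrow> x \<notin> A n" by (auto simp: eventually_sequentially)
    have "{T. goodT T \<and> x \<in> badset R (wT T) T} \<subseteq> enc ` {..<N0}"
    proof
      fix T assume T: "T \<in> {T. goodT T \<and> x \<in> badset R (wT T) T}"
      obtain n where n: "T = enc n" using bij unfolding bij_def surj_def by blast
      have "x \<in> A n" using T n by (simp add: A_def)
      then have "n < N0" using N0 not_le by blast
      then show "T \<in> enc ` {..<N0}" using n by auto
    qed
    then show "finite {T. goodT T \<and> x \<in> badset R (wT T) T}" by (rule finite_subset) simp
  qed
qed



lemma core:
  "AE x in (lborel::(real^'n::finite) measure). (\<forall>i. x$i > 1) \<longrightarrow>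
     (\<exists>c0>0. c0 \<le> 1 \<and> (\<forall>T :: nat \<times> nat \<times> ('n \<Rightarrow> nat) \<times> ('n \<Rightarrow> nat).
         goodT T \<longrightarrow> dT x T \<noteq> 0 \<and> c0 * wT T \<le> \<bar>dT x T\<bar>))"
proof -
  have A1: "AE x in (lborel::(real^'n::finite) measure). \<forall>k::nat. \<forall>T :: nat \<times> nat \<times> ('n \<Rightarrow> nat) \<times> ('n \<Rightarrow> nat).
     goodT T \<longrightarrow> x \<notin> Zset (real (Suc k)) T"
  proof (subst AE_all_countable, intro allI, subst AE_all_countable, intro allI)
    fix k :: nat and T :: "nat \<times> nat \<times> ('n \<Rightarrow> nat) \<times> ('n \<Rightarrow> nat)"
    show "AE x in lborel. goodT T \<longrightarrow> x \<notin> Zset (real (Suc k)) T"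
    proof (cases "goodT T")
      case True
      have "AE x in lborel. x \<notin> Zset (real (Suc k)) T"
        by (rule AE_not_in[OF Zset_null[OF True]]) simp
      then show ?thesis by (rule AE_mp[OF _ AE_I2]) blast
    next
      case False then show ?thesis by simp
    qed
  qed
  have A2: "AE x in (lborel::(real^'n::finite) measure). \<forall>k::nat.
     finite {T :: nat \<times> nat \<times> ('n \<Rightarrow> nat) \<times> ('n \<Rightarrow> nat). goodT T \<and> x \<in> badset (real (Suc k)) (wT T) T}"
  proof (subst AE_all_countable, intro allI)
    fix k :: nat
    show "AE x in (lborel::(real^'n::finite) measure).
     finite {T :: nat \<times> nat \<times> ('n \<Rightarrow> nat) \<times> ('n \<Rightarrow> nat). goodT T \<and> x \<in> badset (real (Suc k)) (wT T) T}"
      by (rule AE_finite_bad) simp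
  qed
  show ?thesis
    using A1 A2
  proof eventually_elim
    case (elim x)
    show ?case
    proof
      assume x1: "\<forall>i. x$i > 1"
      define M where "M = Max (range (\<lambda>i. x$i))"
      have xM: "x$i \<le> M" for i unfolding M_def by (rule Max_ge) auto
      obtain k :: nat where k: "M \<le> real k" using real_arch_simple by blast
      define R where "R = real (Suc k)"
      have box: "1 \<le> x$i \<and> x$i \<le> R" for i
        using x1 xM[of i] k unfolding R_def by (smt (verit) of_nat_Suc)
      define B where "B = {T :: nat \<times> nat \<times> ('n \<Rightarrow> nat) \<times> ('n \<Rightarrow> nat). goodT T \<and> x \<in> badset R (wT T) T}"
      have finB: "finite B" using elim(2) unfolding B_def R_def by blast
      have nz: "dT x T \<noteq> 0" if "goodT T" for T
        using elim(1) that box unfolding R_def Zset_def by blast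
      define c0 where "c0 = Min (insert 1 ((\<lambda>T. \<bar>dT x T\<bar> / wT T) ` B))"
      have c0pos: "c0 > 0" unfolding c0_def
      proof (subst Min_gr_iff)
        show "\<forall>a\<in>insert 1 ((\<lambda>T. \<bar>dT x T\<bar> / wT T) ` B). 0 < a"
        proof
          fix a assume "a \<in> insert 1 ((\<lambda>T. \<bar>dT x T\<bar> / wT T) ` B)"
          then consider "a = 1" | T where "T \<in> B" "a = \<bar>dT x T\<bar> / wT T" by auto
          then show "0 < a"
          proof cases
            case 2
            then have "dT x T \<noteq> 0" using nz by (auto simp: B_def)
            then show ?thesis using 2 wT_pos[of T] by simp
          qed simp
        qed
      qed (use finB in auto)
      have c01: "c0 \<le> 1" unfolding c0_def using finB by (intro Min_le) auto
      have bound: "c0 * wT T \<le> \<bar>dT x T\<bar>" if g: "goodT T" for T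
      proof (cases "T \<in> B")
        case True
        have "c0 \<le> \<bar>dT x T\<bar> / wT T" unfolding c0_def using finB True by (intro Min_le) auto
        then show ?thesis using wT_pos[of T] by (simp add: pos_le_divide_eq)
      next
        case False
        then have "\<not> \<bar>dT x T\<bar> < wT T" using g box by (auto simp: B_def badset_def)
        then have "wT T \<le> \<bar>dT x T\<bar>" by simp
        moreover have "c0 * wT T \<le> 1 * wT T" using c01 wT_pos[of T] by (intro mult_right_mono) auto
        ultimately show ?thesis by simp
      qed
      show "\<exists>c0>0. c0 \<le> 1 \<and> (\<forall>T :: nat \<times> nat \<times> ('n \<Rightarrow> nat) \<times> ('n \<Rightarrow> nat).
         goodT T \<longrightarrow> dT x T \<noteq> 0 \<and> c0 * wT T \<le> \<bar>dT x T\<bar>)"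
        using c0pos c01 nz bound by blast
    qed
  qed
qed



lemma xpow_add: "xpow x (\<lambda>j. a j + b j) = xpow x a * xpow x b"
  unfolding xpow_def by (simp add: power_add prod.distrib)

lemma xpow_ge1: "(\<And>i. x$i \<ge> 1) \<Longrightarrow> xpow x a \<ge> 1"
  unfolding xpow_def by (intro prod_ge_1) (auto simp: one_le_power)

lemma xpow_pos: "(\<And>i. x$i > 0) \<Longrightarrow> xpow x a > 0"
  unfolding xpow_def by (intro prod_pos) auto

lemma xpow_ge_delta:
  assumes "\<And>i. x$i \<ge> d" "d \<ge> 1"
  shows "xpow x a \<ge> d ^ (sum a UNIV)"
proof -
  have "d ^ (sum a UNIV) = (\<Prod>i\<in>UNIV. d ^ a i)" by (simp add: power_sum)
  also have "\<dots> \<le> xpow x a" unfolding xpow_def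
    using assms by (intro prod_mono) (auto intro: power_mono)
  finally show ?thesis .
qed

lemma prod_decomp:
  fixes F :: "(nat + 'n::finite) set"
  assumes F: "finite F"
  shows "(\<Prod>i\<in>F. primes_plus x i ^ e i) =
     real (\<Prod>p\<in>Inl -` F. p ^ e (Inl p)) * xpow x (\<lambda>j. if Inr j \<in> F then e (Inr j) else 0)"
proof -
  have Fsplit: "F = Inl ` (Inl -` F) \<union> Inr ` (Inr -` F)"
  proof
    show "F \<subseteq> Inl ` (Inl -` F) \<union> Inr ` (Inr -` F)"
    proof
      fix i assume "i \<in> F" then show "i \<in> Inl ` (Inl -` F) \<union> Inr ` (Inr -` F)"
        by (cases i) auto
    qed
  qed auto
  have fl: "finite (Inl -` F)" using F by (intro finite_vimageI) auto
  have fr: "finite (Inr -` F)" using F by (intro finite_vimageI) auto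
  have "(\<Prod>i\<in>F. primes_plus x i ^ e i) =
      (\<Prod>i\<in>Inl ` (Inl -` F). primes_plus x i ^ e i) * (\<Prod>i\<in>Inr ` (Inr -` F). primes_plus x i ^ e i)"
    by (subst Fsplit, rule prod.union_disjoint) (use F in auto)
  also have "(\<Prod>i\<in>Inl ` (Inl -` F). primes_plus x i ^ e i) = (\<Prod>p\<in>Inl -` F. real p ^ e (Inl p))"
    by (subst prod.reindex) (auto simp: primes_plus_def)
  also have "(\<Prod>i\<in>Inr ` (Inr -` F). primes_plus x i ^ e i) = (\<Prod>j\<in>Inr -` F. (x$j) ^ e (Inr j))"
    by (subst prod.reindex) (auto simp: primes_plus_def)
  also have "\<dots> = xpow x (\<lambda>j. if Inr j \<in> F then e (Inr j) else 0)"
    unfolding xpow_def by (rule prod.mono_neutral_cong_left) auto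
  finally show ?thesis by simp
qed



lemma cnt_strict:
  fixes B :: "real set"
  assumes fin: "\<And>T. finite {b\<in>B. b \<le> T}" and b1: "b1 \<in> B" and lt: "b1 < b2"
  shows "card {a\<in>B. a < b1} < card {a\<in>B. a < b2}"
proof -
  have f2: "finite {a\<in>B. a < b2}" by (rule finite_subset[OF _ fin[of b2]]) auto
  have "insert b1 {a\<in>B. a < b1} \<subseteq> {a\<in>B. a < b2}" using b1 lt by auto
  then have "card (insert b1 {a\<in>B. a < b1}) \<le> card {a\<in>B. a < b2}" using f2 by (rule card_mono[rotated])
  moreover have "card (insert b1 {a\<in>B. a < b1}) = Suc (card {a\<in>B. a < b1})"
    by (rule card_insert_disjoint) (auto intro: finite_subset[OF _ fin[of b1]])
  ultimately show ?thesis by simp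
qed

lemma cnt_exists:
  fixes B :: "real set"
  assumes fin: "\<And>T. finite {b\<in>B. b \<le> T}" and unb: "\<And>T. \<exists>b\<in>B. b > T" and ne: "B \<noteq> {}"
  shows "\<exists>b\<in>B. card {a\<in>B. a < b} = k"
proof (induction k)
  case 0
  from ne obtain b1 where b1: "b1 \<in> B" by auto
  define S where "S = {b\<in>B. b \<le> b1}"
  have S: "finite S" "S \<noteq> {}" using fin b1 by (auto simp: S_def)
  define b0 where "b0 = Min S"
  have b0: "b0 \<in> B" "b0 \<le> b1" using Min_in[OF S] by (auto simp: b0_def S_def)
  have "{a\<in>B. a < b0} = {}"
  proof (rule ccontr)
    assume "{a\<in>B. a < b0} \<noteq> {}"
    then obtain a where a: "a \<in> B" "a < b0" by auto
    then have "a \<in> S" using b0 by (auto simp: S_def)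
    then have "b0 \<le> a" unfolding b0_def using S by simp
    then show False using a by simp
  qed
  then have "card {a\<in>B. a < b0} = 0" by (simp only: card.empty)
  then show ?case using b0 by blast
next
  case (Suc k)
  then obtain b where b: "b \<in> B" "card {a\<in>B. a < b} = k" by auto
  obtain c where c: "c \<in> B" "c > b" using unb by blast
  define S where "S = {a\<in>B. b < a \<and> a \<le> c}"
  have S: "finite S" "S \<noteq> {}" using c by (auto simp: S_def intro: finite_subset[OF _ fin[of c]])
  define b' where "b' = Min S"
  have b': "b' \<in> B" "b < b'" "b' \<le> c" using Min_in[OF S] by (auto simp: b'_def S_def)
  have eq: "{a\<in>B. a < b'} = insert b {a\<in>B. a < b}"
  proof
    show "{a\<in>B. a < b'} \<subseteq> insert b {a\<in>B. a < b}"
    proof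
      fix a assume a: "a \<in> {a\<in>B. a < b'}"
      have "\<not> b < a"
      proof
        assume "b < a"
        then have "a \<in> S" using a b' by (auto simp: S_def)
        then have "b' \<le> a" unfolding b'_def using S by simp
        then show False using a by simp
      qed
      then show "a \<in> insert b {a\<in>B. a < b}" using a by auto
    qed
    show "insert b {a\<in>B. a < b} \<subseteq> {a\<in>B. a < b'}" using b b' by auto
  qed
  have "card {a\<in>B. a < b'} = Suc k"
    unfolding eq using b by (subst card_insert_disjoint) (auto intro: finite_subset[OF _ fin[of b]])
  then show ?case using b' by blast
qed

lemma cnt_unique:
  fixes B :: "real set"
  assumes fin: "\<And>T. finite {b\<in>B. b \<le> T}" and unb: "\<And>T. \<exists>b\<in>B. b > T" and ne: "B \<noteq> {}"
  shows "\<exists>!b. b \<in> B \<and> card {a\<in>B. a < b} = k"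
proof -
  from cnt_exists[OF fin unb ne] obtain b where b: "b \<in> B" "card {a\<in>B. a < b} = k" by blast
  have "b2 = b" if "b2 \<in> B" "card {a\<in>B. a < b2} = k" for b2
  proof (rule ccontr)
    assume "b2 \<noteq> b"
    then consider "b2 < b" | "b < b2" by linarith
    then show False
    proof cases
      case 1 then show False using cnt_strict[OF fin that(1) 1] b that by simp
    next
      case 2 then show False using cnt_strict[OF fin b(1) 2] b that by simp
    qed
  qed
  then show ?thesis using b by blast
qed

lemma nu_props:
  assumes fin: "\<And>T. finite {b\<in>beurling_integers I g. b \<le> T}"
    and unb: "\<And>T. \<exists>b\<in>beurling_integers I g. b > T" and ne: "beurling_integers I g \<noteq> {}"
    and n: "n \<ge> 1"
  shows "beurling_nu I g n \<in> beurling_integers I g"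
    "beurling_nu I g n < beurling_nu I g (Suc n)"
proof -
  let ?B = "beurling_integers I g"
  have P: "beurling_nu I g k \<in> ?B \<and> card {a\<in>?B. a < beurling_nu I g k} = k - 1" for k
    unfolding beurling_nu_def by (rule theI') (rule cnt_unique[OF fin unb ne])
  show "beurling_nu I g n \<in> ?B" using P by blast
  show "beurling_nu I g n < beurling_nu I g (Suc n)"
  proof (rule ccontr)
    assume "\<not> ?thesis"
    then have le: "beurling_nu I g (Suc n) \<le> beurling_nu I g n" by simp
    have "card {a\<in>?B. a < beurling_nu I g (Suc n)} \<le> card {a\<in>?B. a < beurling_nu I g n}"
      using le by (intro card_mono) (auto intro: finite_subset[OF _ fin[of "beurling_nu I g n"]])
    then show False using P[of n] P[of "Suc n"] n by simp
  qed
qed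



lemma index_prime: "Inl p \<in> primes_plus_index \<Longrightarrow> prime p"
  by (auto simp: primes_plus_index_def)

lemma BI_form:
  assumes "b \<in> beurling_integers primes_plus_index (primes_plus (x :: real^'n::finite))"
  shows "\<exists>m a. m \<ge> 1 \<and> b = real m * xpow x a"
proof -
  from assms obtain F k where F: "finite F" "F \<subseteq> primes_plus_index" and b: "b = (\<Prod>i\<in>F. primes_plus x i ^ k i)"
    unfolding beurling_integers_def by blast
  define m where "m = (\<Prod>p\<in>Inl -` F. p ^ k (Inl p))"
  have "m \<ge> 1" unfolding m_def
  proof (intro prod_ge_1)
    fix p assume "p \<in> Inl -` F"
    then have "prime p" using F by (auto intro: index_prime)
    then have "p \<ge> 1" using prime_gt_1_nat by (simp add: Suc_leI prime_gt_0_nat)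
    then show "1 \<le> p ^ k (Inl p)" by (simp add: one_le_power)
  qed
  moreover have "b = real m * xpow x (\<lambda>j. if Inr j \<in> F then k (Inr j) else 0)"
    unfolding b m_def by (rule prod_decomp[OF F(1)])
  ultimately show ?thesis by blast
qed

lemma BI_pow2: "2 ^ k \<in> beurling_integers primes_plus_index (primes_plus (x :: real^'n::finite))"
proof -
  have "Inl 2 \<in> (primes_plus_index :: (nat + 'n) set)" by (simp add: primes_plus_index_def)
  then have "(\<Prod>i\<in>{Inl 2 :: nat + 'n}. primes_plus x i ^ (\<lambda>_. k) i) \<in> beurling_integers primes_plus_index (primes_plus x)"
    unfolding beurling_integers_def by (intro CollectI exI[of _ "{Inl 2 :: nat + 'n}"] exI[of _ "\<lambda>_. k"]) auto
  then show ?thesis by (simp add: primes_plus_def)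
qed

lemma BI_unb: "\<exists>b\<in>beurling_integers primes_plus_index (primes_plus (x :: real^'n::finite)). b > T"
proof -
  obtain k where "T < 2 ^ k" using real_arch_pow[of 2 T] by auto
  then show ?thesis using BI_pow2[of k x] by blast
qed

lemma BI_fin:
  assumes x1: "\<And>i. (x :: real^'n::finite)$i > 1"
  shows "finite {b\<in>beurling_integers primes_plus_index (primes_plus x). b \<le> T}"
proof -
  define d where "d = Min (range (\<lambda>i. x$i))"
  have d1: "d > 1" unfolding d_def using x1 by (subst Min_gr_iff) auto
  have xd: "x$i \<ge> d" for i unfolding d_def by (rule Min_le) auto
  obtain K where K: "T < d ^ K" using real_arch_pow[OF d1] by auto
  define S where "S = (\<lambda>(m,a). real m * xpow x a) ` ({..nat \<lfloor>T\<rfloor>} \<times> Pi\<^sub>E UNIV (\<lambda>_. {..K}))"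
  have "finite S" unfolding S_def by (intro finite_imageI finite_cartesian_product finite_PiE) auto
  moreover have "{b\<in>beurling_integers primes_plus_index (primes_plus x). b \<le> T} \<subseteq> S"
  proof
    fix b assume "b \<in> {b\<in>beurling_integers primes_plus_index (primes_plus x). b \<le> T}"
    then obtain m a where m: "m \<ge> 1" and b: "b = real m * xpow x a" and bT: "b \<le> T"
      using BI_form by blast
    have X1: "xpow x a \<ge> 1" using x1 by (intro xpow_ge1) (simp add: less_imp_le)
    have "real m \<le> b" unfolding b using X1 m by simp
    then have "real m \<le> T" using bT by simp
    then have mT: "m \<le> nat \<lfloor>T\<rfloor>" by (simp add: le_nat_floor)
    have "1 * xpow x a \<le> real m * xpow x a" using X1 m by (intro mult_right_mono) auto
    then have "xpow x a \<le> b" unfolding b by simp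
    have ai: "a i \<le> K" for i
    proof -
      have "d ^ a i \<le> d ^ sum a UNIV" using d1 by (intro power_increasing member_le_sum) auto
      also have "\<dots> \<le> xpow x a" using xd d1 by (intro xpow_ge_delta) auto
      also have "\<dots> \<le> T" using \<open>xpow x a \<le> b\<close> bT by simp
      also have "\<dots> < d ^ K" by fact
      finally show ?thesis using d1 by (simp add: power_less_imp_less_exp less_imp_le)
    qed
    show "b \<in> S" unfolding S_def b using mT ai by (auto simp: PiE_UNIV_domain)
  qed
  ultimately show ?thesis by (rule finite_subset[rotated])
qed



lemma rat_common_denom:
  fixes c :: "'i \<Rightarrow> rat"
  assumes "finite F"
  shows "\<exists>D::int. D > 0 \<and> (\<exists>d. \<forall>i\<in>F. of_rat (c i) * real_of_int D = real_of_int (d i))"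
  using assms
proof (induction F rule: finite_induct)
  case empty
  show ?case by (intro exI[of _ 1]) auto
next
  case (insert i F)
  from insert.IH obtain D d where D: "D > 0" and d: "\<forall>j\<in>F. of_rat (c j) * real_of_int D = real_of_int (d j)"
    by blast
  obtain p q where pq: "quotient_of (c i) = (p, q)" by (cases "quotient_of (c i)") auto
  have q: "q > 0" using quotient_of_denom_pos[OF pq] .
  have ci: "c i = of_int p / of_int q" using quotient_of_div[OF pq] .
  have ci': "of_rat (c i) = real_of_int p / real_of_int q" unfolding ci by (simp add: of_rat_divide)
  define d' where "d' = (\<lambda>j. if j = i then p * D else d j * q)"
  have "\<forall>j\<in>insert i F. of_rat (c j) * real_of_int (D * q) = real_of_int (d' j)"
  proof
    fix j assume j: "j \<in> insert i F"
    show "of_rat (c j) * real_of_int (D * q) = real_of_int (d' j)"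
    proof (cases "j = i")
      case True
      then show ?thesis using q by (simp add: d'_def ci')
    next
      case False
      then have "j \<in> F" using j by simp
      then have "of_rat (c j) * real_of_int (D * q) = real_of_int (d j) * real_of_int q"
        using d by (simp add: mult.assoc[symmetric])
      then show ?thesis using False by (simp add: d'_def)
    qed
  qed
  moreover have "D * q > 0" using D q by simp
  ultimately show ?case by blast
qed

lemma ln_prod_pow:
  assumes "finite F" "\<And>i. i \<in> F \<Longrightarrow> (g i :: real) > 0"
  shows "ln (\<Prod>i\<in>F. g i ^ e i) = (\<Sum>i\<in>F. real (e i) * ln (g i))"
proof -
  have "ln (\<Prod>i\<in>F. g i ^ e i) = (\<Sum>i\<in>F. ln (g i ^ e i))"
    by (rule ln_prod) (use assms in \<open>auto dest: assms(2) simp: less_irrefl\<close>)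
  also have "\<dots> = (\<Sum>i\<in>F. real (e i) * ln (g i))"
    by (rule sum.cong) (auto simp: ln_realpow assms)
  finally show ?thesis .
qed

lemma lin_indep:
  fixes x :: "real^'n::finite"
  assumes x1: "\<And>i. x$i > 1" and nz: "\<And>T. goodT T \<Longrightarrow> dT x T \<noteq> 0"
    and F: "finite F" "F \<subseteq> primes_plus_index"
    and s: "(\<Sum>i\<in>F. of_rat (c i) * ln (primes_plus x i)) = 0"
  shows "\<forall>i\<in>F. c i = 0"
proof -
  let ?g = "primes_plus x"
  have gpos: "?g i > 0" if "i \<in> F" for i
  proof (cases i)
    case (Inl p)
    then have "prime p" using that F by (auto simp: primes_plus_index_def)
    then show ?thesis using Inl by (simp add: primes_plus_def prime_gt_0_nat)
  next
    case (Inr j) then show ?thesis using x1[of j] by (simp add: primes_plus_def)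
  qed
  obtain D d where D: "(D::int) > 0" and d: "\<forall>i\<in>F. of_rat (c i) * real_of_int D = real_of_int (d i)"
    using rat_common_denom[OF F(1), of c] by blast
  have sd: "(\<Sum>i\<in>F. real_of_int (d i) * ln (?g i)) = 0"
  proof -
    have "(\<Sum>i\<in>F. real_of_int (d i) * ln (?g i)) = (\<Sum>i\<in>F. (of_rat (c i) * ln (?g i)) * real_of_int D)"
      by (rule sum.cong) (simp_all add: d[rule_format, symmetric] mult_ac)
    also have "\<dots> = (\<Sum>i\<in>F. of_rat (c i) * ln (?g i)) * real_of_int D"
      by (rule sum_distrib_right[symmetric])
    finally have "(\<Sum>i\<in>F. real_of_int (d i) * ln (?g i)) = (\<Sum>i\<in>F. of_rat (c i) * ln (?g i)) * real_of_int D" .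
    then show ?thesis using s by simp
  qed
  define ep where "ep = (\<lambda>i. nat (d i))"
  define en where "en = (\<lambda>i. nat (- d i))"
  have dsplit: "real_of_int (d i) = real (ep i) - real (en i)" for i
    by (simp add: ep_def en_def)
  have epen: "ep i = 0 \<or> en i = 0" for i by (simp add: ep_def en_def) linarith
  have "(\<Sum>i\<in>F. real (ep i) * ln (?g i)) = (\<Sum>i\<in>F. real (en i) * ln (?g i))"
  proof -
    have "(\<Sum>i\<in>F. real (ep i) * ln (?g i)) - (\<Sum>i\<in>F. real (en i) * ln (?g i))
        = (\<Sum>i\<in>F. real_of_int (d i) * ln (?g i))"
      by (simp add: dsplit sum_subtractf[symmetric] algebra_simps)
    then show ?thesis using sd by simp
  qed
  then have "ln (\<Prod>i\<in>F. ?g i ^ ep i) = ln (\<Prod>i\<in>F. ?g i ^ en i)"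
    using F(1) gpos by (simp add: ln_prod_pow)
  then have peq: "(\<Prod>i\<in>F. ?g i ^ ep i) = (\<Prod>i\<in>F. ?g i ^ en i)"
    using F(1) gpos by (subst (asm) ln_inj_iff) (auto intro!: prod_pos)
  define m1 where "m1 = (\<Prod>p\<in>Inl -` F. p ^ ep (Inl p))"
  define m2 where "m2 = (\<Prod>p\<in>Inl -` F. p ^ en (Inl p))"
  define a1 where "a1 = (\<lambda>j. if Inr j \<in> F then ep (Inr j) else 0)"
  define a2 where "a2 = (\<lambda>j. if Inr j \<in> F then en (Inr j) else 0)"
  have eq: "real m1 * xpow x a1 = real m2 * xpow x a2"
    using peq unfolding m1_def m2_def a1_def a2_def prod_decomp[OF F(1)] .
  have primesF: "prime p" if "p \<in> Inl -` F" for p using that F by (auto simp: primes_plus_index_def)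
  have m1: "m1 \<ge> 1" unfolding m1_def
    by (intro prod_ge_1) (use primesF prime_gt_0_nat in \<open>auto simp: Suc_le_eq\<close>)
  have m2: "m2 \<ge> 1" unfolding m2_def
    by (intro prod_ge_1) (use primesF prime_gt_0_nat in \<open>auto simp: Suc_le_eq\<close>)
  have a0: "a1 j = 0 \<and> a2 j = 0" for j
  proof (rule ccontr)
    assume "\<not> (a1 j = 0 \<and> a2 j = 0)"
    moreover have "a1 j = 0 \<or> a2 j = 0" using epen by (simp add: a1_def a2_def)
    ultimately consider "a1 j > 0" "a2 j = 0" | "a2 j > 0" "a1 j = 0" by auto
    then show False
    proof cases
      case 1
      have "goodT (m1, m2, a1, a2)" using m1 1 by (auto simp: goodT_def)
      then show False using nz eq by (auto simp: dT_def)
    next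
      case 2
      have "goodT (m2, m1, a2, a1)" using m2 2 by (auto simp: goodT_def)
      from nz[OF this] show False using eq by (simp add: dT_def)
    qed
  qed
  have "xpow x a1 = 1" "xpow x a2 = 1" using a0 by (auto simp: xpow_def)
  then have "m1 = m2" using eq by simp
  show ?thesis
  proof
    fix i assume i: "i \<in> F"
    have "ep i = 0 \<and> en i = 0"
    proof (cases i)
      case (Inr j)
      then show ?thesis using a0[of j] i by (simp add: a1_def a2_def)
    next
      case (Inl p)
      have pS: "p \<in> Inl -` F" using i Inl by simp
      have fin: "finite (Inl -` F)" using F(1) by (intro finite_vimageI) auto
      have "multiplicity p m1 = ep (Inl p)"
        unfolding m1_def by (subst multiplicity_prod_prime_powers) (use fin primesF pS in auto)
      moreover have "multiplicity p m2 = en (Inl p)"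
        unfolding m2_def by (subst multiplicity_prod_prime_powers) (use fin primesF pS in auto)
      ultimately have "ep (Inl p) = en (Inl p)" using \<open>m1 = m2\<close> by simp
      then show ?thesis using epen[of i] Inl by auto
    qed
    then have "d i = 0" by (simp add: ep_def en_def)
    then have "of_rat (c i) * real_of_int D = 0" using d i by simp
    then show "c i = 0" using D by simp
  qed
qed



lemma sum_bound_aux:
  fixes x :: "real^'n::finite"
  assumes xd: "\<And>i. x$i \<ge> d" and d1: "d \<ge> 1" and L: "2 \<le> d ^ L" and Xv: "xpow x b \<le> v"
  shows "real (sum b UNIV + 1) \<le> v ^ L"
proof -
  let ?s = "sum b UNIV"
  have "real (?s + 1) \<le> 2 ^ ?s"
  proof -
    have "?s + 1 \<le> 2 ^ ?s" using less_exp[of ?s] by linarith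
    then have "real (?s + 1) \<le> real (2 ^ ?s)" by (simp only: of_nat_le_iff)
    then show ?thesis by simp
  qed
  also have "\<dots> \<le> (d ^ L) ^ ?s" by (rule power_mono[OF L]) simp
  also have "\<dots> = (d ^ ?s) ^ L" by (simp flip: power_mult add: mult.commute)
  also have "\<dots> \<le> (xpow x b) ^ L"
    by (rule power_mono[OF xpow_ge_delta[OF xd d1]]) (use d1 in simp)
  also have "\<dots> \<le> v ^ L"
  proof (rule power_mono[OF Xv])
    have "xpow x b \<ge> 1" using xd d1 order_trans by (intro xpow_ge1) blast
    then show "0 \<le> xpow x b" by simp
  qed
  finally show ?thesis .
qed

lemma pair_bound:
  fixes x :: "real^'n::finite"
  assumes x1: "\<And>i. x$i > 1" and c0: "c0 > 0" "c0 \<le> 1"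
    and hc: "\<And>T. goodT T \<Longrightarrow> c0 * wT T \<le> \<bar>dT x T\<bar>"
    and xd: "\<And>i. x$i \<ge> d" and d1: "d \<ge> 1" and L: "2 \<le> d ^ L" "L \<ge> 1"
    and m1: "m1 \<ge> 1" and m2: "m2 \<ge> 1"
    and uv: "real m1 * xpow x a1 < real m2 * xpow x a2"
  shows "real m2 * xpow x a2 - real m1 * xpow x a1 \<ge>
     (c0 / 4 ^ (2 * CARD('n) + 4)) * inverse ((real m2 * xpow x a2) ^ (L * (2 * CARD('n) + 4)))"
proof -
  define E where "E = 2 * CARD('n) + 4"
  define u where "u = real m1 * xpow x a1"
  define v where "v = real m2 * xpow x a2"
  define cc where "cc = (\<lambda>j. min (a1 j) (a2 j))"
  define b1 where "b1 = (\<lambda>j. a1 j - cc j)"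
  define b2 where "b2 = (\<lambda>j. a2 j - cc j)"
  have x1': "\<And>i. x$i \<ge> 1" using x1 less_imp_le by blast
  have xp: "\<And>i. x$i > 0" using x1 by (meson less_trans zero_less_one)
  have a1e: "a1 = (\<lambda>j. b1 j + cc j)" by (auto simp: b1_def cc_def)
  have a2e: "a2 = (\<lambda>j. b2 j + cc j)" by (auto simp: b2_def cc_def)
  define Xc where "Xc = xpow x cc"
  define X1 where "X1 = xpow x b1"
  define X2 where "X2 = xpow x b2"
  have Xc: "Xc \<ge> 1" unfolding Xc_def using x1' by (rule xpow_ge1)
  have X1: "X1 \<ge> 1" unfolding X1_def using x1' by (rule xpow_ge1)
  have X2: "X2 \<ge> 1" unfolding X2_def using x1' by (rule xpow_ge1)
  have u: "u = Xc * (real m1 * X1)" unfolding u_def Xc_def X1_def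
    by (subst a1e, subst xpow_add) (simp add: mult_ac)
  have v: "v = Xc * (real m2 * X2)" unfolding v_def Xc_def X2_def
    by (subst a2e, subst xpow_add) (simp add: mult_ac)
  define Dd where "Dd = real m2 * X2 - real m1 * X1"
  have vu: "v - u = Xc * Dd" unfolding u v Dd_def by (simp add: algebra_simps)
  have "v - u > 0" using uv by (simp add: u_def v_def)
  then have Ddpos: "Dd > 0" using vu Xc by (simp add: zero_less_mult_iff)
  have "1 * Dd \<le> Xc * Dd" by (rule mult_right_mono) (use Xc Ddpos in auto)
  then have vuD: "v - u \<ge> Dd" unfolding vu by simp
  have m1r: "real m1 \<ge> 1" "real m2 \<ge> 1" using m1 m2 by auto
  have "1 * 1 \<le> real m2 * xpow x a2" using m1r xpow_ge1[OF x1'] by (intro mult_mono) auto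
  then have v1: "v \<ge> 1" unfolding v_def by simp
  have "1 * 1 \<le> real m1 * xpow x a1" using m1r xpow_ge1[OF x1'] by (intro mult_mono) auto
  then have u1: "u \<ge> 1" unfolding u_def by simp
  have uvle: "u \<le> v" using uv by (simp add: u_def v_def)
  have "real m2 * 1 \<le> real m2 * xpow x a2" using m1r xpow_ge1[OF x1'] by (intro mult_left_mono) auto
  then have m2v: "real m2 \<le> v" unfolding v_def by simp
  have "real m1 * 1 \<le> real m1 * xpow x a1" using m1r xpow_ge1[OF x1'] by (intro mult_left_mono) auto
  then have m1v: "real m1 \<le> v" using uvle unfolding u_def by simp
  have X2v: "X2 \<le> v"
  proof -
    have "1 * X2 \<le> Xc * X2" using Xc X2 by (intro mult_right_mono) auto
    also have "\<dots> \<le> Xc * (real m2 * X2)" using Xc X2 m1r by (intro mult_left_mono) auto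
    finally show ?thesis using v by simp
  qed
  have X1v: "X1 \<le> v"
  proof -
    have "1 * X1 \<le> Xc * X1" using Xc X1 by (intro mult_right_mono) auto
    also have "\<dots> \<le> Xc * (real m1 * X1)" using Xc X1 m1r by (intro mult_left_mono) auto
    finally show ?thesis using u uvle by simp
  qed
  have vL: "v \<le> v ^ L" using v1 L(2) by (simp add: power_increasing[of 1 L v, simplified])
  have s1: "real (sum b1 UNIV + 1) \<le> v ^ L"
    by (rule sum_bound_aux[OF xd d1 L(1)]) (use X1v X1_def in simp)
  have s2: "real (sum b2 UNIV + 1) \<le> v ^ L"
    by (rule sum_bound_aux[OF xd d1 L(1)]) (use X2v X2_def in simp)
  define H where "H = real (m1 + m2 + sum b1 UNIV + sum b2 UNIV + 1)"
  have H: "H \<le> 4 * v ^ L"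
  proof -
    have "H = real m1 + real m2 + real (sum b1 UNIV + 1) + real (sum b2 UNIV + 1) - 1"
      by (simp add: H_def)
    also have "\<dots> \<le> 4 * v ^ L" using m1v m2v s1 s2 vL by linarith
    finally show ?thesis .
  qed
  have H1: "H \<ge> 1" unfolding H_def
    by (rule order_trans[OF _ of_nat_mono[of 1]]) simp_all
  have wlow: "inverse ((4 * v ^ L) ^ E) \<le> inverse (H ^ E)"
    using H H1 by (intro le_imp_inverse_le power_mono) auto
  have wT_eq: "wT T = inverse (H ^ E)" if "T = (m1, m2, b1, b2) \<or> T = (m2, m1, b2, b1)" for T
    using that by (auto simp: wT_def hT_def H_def E_def ac_simps)
  have inv_eq: "inverse ((4 * v ^ L) ^ E) = inverse (4 ^ E) * inverse (v ^ (L * E))"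
    by (simp add: power_mult_distrib power_mult inverse_mult_distrib)
  have target_le_1: "(c0 / 4 ^ E) * inverse (v ^ (L * E)) \<le> 1"
  proof -
    have "inverse (v ^ (L * E)) \<le> 1" using v1 by (simp add: one_le_power inverse_le_1_iff)
    moreover have "c0 / 4 ^ E \<le> 1" using c0 by (simp add: divide_le_eq_1 order_trans[of c0 1])
    moreover have "inverse (v ^ (L * E)) \<ge> 0" using v1 by simp
    moreover have "c0 / 4 ^ E \<ge> 0" using c0 by simp
    ultimately have "(c0 / 4 ^ E) * inverse (v ^ (L * E)) \<le> 1 * 1" by (intro mult_mono) auto
    then show ?thesis by simp
  qed
  have main: "Dd \<ge> (c0 / 4 ^ E) * inverse (v ^ (L * E))"
  proof (cases "b1 = b2")
    case True
    then have "Dd = (real m2 - real m1) * X2" unfolding Dd_def X1_def X2_def by (simp add: algebra_simps)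
    then have "real m2 - real m1 > 0" using Ddpos X2 by (simp add: zero_less_mult_iff)
    then have "m1 < m2" by simp
    then have "real m2 - real m1 \<ge> 1" by linarith
    then have "1 * 1 \<le> (real m2 - real m1) * X2" using X2 by (intro mult_mono) auto
    then have "Dd \<ge> 1 * 1" using \<open>Dd = (real m2 - real m1) * X2\<close> by simp
    then show ?thesis using target_le_1 by linarith
  next
    case False
    then obtain j where j: "b1 j \<noteq> b2 j" by auto
    have "b1 j = 0 \<or> b2 j = 0" by (simp add: b1_def b2_def cc_def) linarith
    then consider "b2 j > 0" "b1 j = 0" | "b1 j > 0" "b2 j = 0" using j by auto
    then obtain T where T: "goodT T" "\<bar>dT x T\<bar> = Dd" "T = (m1, m2, b1, b2) \<or> T = (m2, m1, b2, b1)"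
    proof cases
      case 1
      have "goodT (m2, m1, b2, b1)" using 1 m2 by (auto simp: goodT_def)
      moreover have "\<bar>dT x (m2, m1, b2, b1)\<bar> = Dd" using Ddpos by (simp add: dT_def Dd_def X1_def X2_def)
      ultimately show ?thesis using that by blast
    next
      case 2
      have "goodT (m1, m2, b1, b2)" using 2 m1 by (auto simp: goodT_def)
      moreover have "\<bar>dT x (m1, m2, b1, b2)\<bar> = Dd" using Ddpos by (simp add: dT_def Dd_def X1_def X2_def)
      ultimately show ?thesis using that by blast
    qed
    have "(c0 / 4 ^ E) * inverse (v ^ (L * E)) = c0 * inverse ((4 * v ^ L) ^ E)"
      by (simp add: inv_eq divide_inverse power_mult)
    also have "\<dots> \<le> c0 * inverse (H ^ E)" using wlow c0 by (intro mult_left_mono) auto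
    also have "\<dots> = c0 * wT T" using wT_eq[OF T(3)] by simp
    also have "\<dots> \<le> Dd" using hc[OF T(1)] T(2) by simp
    finally show ?thesis .
  qed
  show ?thesis using main vuD unfolding u_def v_def E_def by linarith
qed



theorem theorem1p1:
  shows "AE x in (lborel :: (real ^ 'n) measure).
           (\<forall>i. x $ i > 1) \<longrightarrow>
             beurling_prime_system primes_plus_index (primes_plus x) \<and>
             bohr_condition primes_plus_index (primes_plus x)"
  using core
proof eventually_elim
  case (elim x)
  show ?case
  proof
    assume x1: "\<forall>i. x $ i > 1"
    then obtain c0 where c0: "c0 > 0" "c0 \<le> 1"
      and hc: "\<And>T. goodT T \<Longrightarrow> dT x T \<noteq> 0 \<and> c0 * wT T \<le> \<bar>dT x T\<bar>"
      using elim by blast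
    let ?I = "primes_plus_index :: (nat + 'n) set"
    let ?g = "primes_plus x"
    have bps: "beurling_prime_system ?I ?g"
      unfolding beurling_prime_system_def
    proof (intro conjI allI impI ballI)
      fix i assume "i \<in> ?I"
      then show "?g i > 1"
        using x1 by (cases i) (auto simp: primes_plus_def primes_plus_index_def dest: prime_gt_1_nat)
    next
      fix T :: real
      have "{i \<in> ?I. ?g i \<le> T} \<subseteq> Inl ` {..nat \<lceil>T\<rceil>} \<union> Inr ` UNIV"
      proof
        fix i assume i: "i \<in> {i \<in> ?I. ?g i \<le> T}"
        show "i \<in> Inl ` {..nat \<lceil>T\<rceil>} \<union> Inr ` UNIV"
        proof (cases i)
          case (Inl p)
          then have "real p \<le> T" using i by (simp add: primes_plus_def)
          then have "p \<le> nat \<lceil>T\<rceil>" by linarith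
          then show ?thesis using Inl by auto
        qed auto
      qed
      then show "finite {i \<in> ?I. ?g i \<le> T}" by (rule finite_subset) auto
    next
      fix F c assume "finite F" "F \<subseteq> ?I" "(\<Sum>i\<in>F. of_rat (c i) * ln (?g i)) = 0"
      fix i assume "i \<in> F"
      then show "c i = 0"
        using lin_indep[of x F c] x1 hc \<open>finite F\<close> \<open>F \<subseteq> ?I\<close> \<open>(\<Sum>i\<in>F. of_rat (c i) * ln (?g i)) = 0\<close>
        by blast
    qed
    have bohr: "bohr_condition ?I ?g"
    proof -
      define d where "d = Min (range (\<lambda>i. x$i))"
      have d1: "d > 1" unfolding d_def using x1 by (subst Min_gr_iff) auto
      have xd: "x$i \<ge> d" for i unfolding d_def by (rule Min_le) auto
      obtain L where L: "2 < d ^ L" using real_arch_pow[OF d1] by blast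
      have L1: "L \<ge> 1" using L by (cases L) auto
      define E where "E = 2 * CARD('n) + 4"
      define c1 where "c1 = c0 / 4 ^ E"
      define c2 where "c2 = real (L * E)"
      have c1: "c1 > 0" using c0 by (simp add: c1_def)
      have c2: "c2 > 0" using L1 by (simp add: c2_def E_def)
      have fin: "\<And>T. finite {b\<in>beurling_integers ?I ?g. b \<le> T}" using BI_fin x1 by blast
      have unb: "\<And>T. \<exists>b\<in>beurling_integers ?I ?g. b > T" by (rule BI_unb)
      have ne: "beurling_integers ?I ?g \<noteq> {}" using BI_pow2[of 0 x] by blast
      have "\<forall>n\<ge>1. beurling_nu ?I ?g (Suc n) - beurling_nu ?I ?g n
                 \<ge> c1 * beurling_nu ?I ?g (Suc n) powr (- c2)"
      proof (intro allI impI)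
        fix n :: nat assume n: "n \<ge> 1"
        have u: "beurling_nu ?I ?g n \<in> beurling_integers ?I ?g"
          and uv: "beurling_nu ?I ?g n < beurling_nu ?I ?g (Suc n)"
          using nu_props[OF fin unb ne n] by auto
        have v: "beurling_nu ?I ?g (Suc n) \<in> beurling_integers ?I ?g"
          using nu_props[OF fin unb ne, of "Suc n"] by auto
        obtain m1 a1 where m1: "m1 \<ge> 1" "beurling_nu ?I ?g n = real m1 * xpow x a1"
          using BI_form[OF u] by blast
        obtain m2 a2 where m2: "m2 \<ge> 1" "beurling_nu ?I ?g (Suc n) = real m2 * xpow x a2"
          using BI_form[OF v] by blast
        have pb: "real m2 * xpow x a2 - real m1 * xpow x a1 \<ge>
            (c0 / 4 ^ (2 * CARD('n) + 4)) * inverse ((real m2 * xpow x a2) ^ (L * (2 * CARD('n) + 4)))"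
          by (rule pair_bound[OF _ c0 _ xd _ _ L1 m1(1) m2(1)])
             (use x1 hc d1 L uv m1 m2 in auto)
        have vpos: "real m2 * xpow x a2 > 0"
          using m2(1) xpow_pos[of x a2] x1 by (simp add: less_trans[OF zero_less_one])
        have "(real m2 * xpow x a2) powr (- c2) = inverse ((real m2 * xpow x a2) ^ (L * E))"
          unfolding c2_def powr_minus using powr_realpow[OF vpos, of "L * E"] by simp
        then show "beurling_nu ?I ?g (Suc n) - beurling_nu ?I ?g n
                 \<ge> c1 * beurling_nu ?I ?g (Suc n) powr (- c2)"
          using pb m1(2) m2(2) by (simp add: c1_def E_def)
      qed
      then show ?thesis unfolding bohr_condition_def using c1 c2 by blast
    qed
    show "beurling_prime_system ?I ?g \<and> bohr_condition ?I ?g" using bps bohr by blast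
  qed
qed


end
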